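(* There exist absolute constants $C<\infty$ and $K_0$ such that the following holds. Let $N\ge0$ be an integer, $\theta\in[0,\pi)$ and $K\ge K_0$, and suppose $$\big|\{s\in\mathbb R:\ f^*_{N,\theta}(s)\ge K\}\big|\le K^{-3}.$$ Then $$\max_{0\le n\le N}\|f_{n,\theta}\|^2_{L^2(\mathbb R)}\le C\,K.$$
   Context: For $n\ge 0$ and $\alpha\in\{-1,0,1\}^n$ let $z_\alpha=\sum_{k=1}^n 3^{-k}e^{i\pi(\frac12+\frac23\alpha_k)}$ (so $z_\alpha=0$ when $n=0$), and let $\operatorname{proj}_\theta(w)=\operatorname{Re}(we^{-i\theta})$. The projection multiplicity function is $f_{n,\theta}(s)=\#\{\alpha\in\{-1,0,1\}^n:\ |\operatorname{proj}_\theta(z_\alpha)-s|<3^{-n}\}$, $s\in\mathbb R$, i.e. the number of the $3^n$ discs $B(z_\alpha,3^{-n})$ whose projection contains $s$. For $N\ge0$, $f^*_{N,\theta}(s)=\max_{0\le n\le N}f_{n,\theta}(s)$. $|\cdot|$ denotes Lebesgue measure. *)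

theory Defs
  imports "HOL-Analysis.Analysis"
begin

text \<open>Digit sequences alpha in {-1,0,1}^n, represented as lists of length n;
  entry k (1-based) is the list element at index k-1.\<close>
definition digits :: "nat \<Rightarrow> int list set" where
  "digits n = {a. length a = n \<and> set a \<subseteq> {-1, 0, 1}}"

definition zpt :: "int list \<Rightarrow> complex" where
  "zpt a = (\<Sum>k<length a. complex_of_real ((1/3) ^ (k+1)) *
      exp (\<i> * complex_of_real (pi * (1/2 + (2/3) * real_of_int (a ! k)))))"

definition proj :: "real \<Rightarrow> complex \<Rightarrow> real" where
  "proj \<theta> w = Re (w * exp (- \<i> * complex_of_real \<theta>))"

definition fmult :: "nat \<Rightarrow> real \<Rightarrow> real \<Rightarrow> nat" where
  "fmult n \<theta> s = card {a \<in> digits n. \<bar>proj \<theta> (zpt a) - s\<bar> < (1/3) ^ n}"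

definition fstar :: "nat \<Rightarrow> real \<Rightarrow> real \<Rightarrow> nat" where
  "fstar N \<theta> s = Max ((\<lambda>n. fmult n \<theta> s) ` {0..N})"

end

theory Submission imports Defs begin

definition ee :: "int \<Rightarrow> complex" where
  "ee x = exp (\<i> * complex_of_real (pi * (1/2 + (2/3) * real_of_int x)))"

lemma norm_ee[simp]: "norm (ee x) = 1"
  unfolding ee_def by (rule norm_exp_i_times)

lemma zpt_Nil[simp]: "zpt [] = 0"
  by (simp add: zpt_def)

lemma zpt_Cons: "zpt (x # b) = (1/3) * (ee x + zpt b)"
proof -
  have "zpt (x # b) = (\<Sum>k<Suc (length b). complex_of_real ((1/3) ^ (k+1)) * ee ((x#b) ! k))"
    by (simp add: zpt_def ee_def)
  also have "\<dots> = complex_of_real (1/3) * ee x + (\<Sum>k<length b. complex_of_real ((1/3) ^ (k+2)) * ee (b ! k))"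
    by (subst sum.lessThan_Suc_shift) simp
  also have "(\<Sum>k<length b. complex_of_real ((1/3) ^ (k+2)) * ee (b ! k)) = (1/3) * zpt b"
    by (simp add: zpt_def ee_def sum_distrib_left mult.assoc)
  finally show ?thesis by (simp add: algebra_simps)
qed

lemma zpt_append: "zpt (a @ b) = zpt a + complex_of_real ((1/3) ^ length a) * zpt b"
  by (induction a) (simp_all add: zpt_Cons algebra_simps)

lemma norm_zpt: "norm (zpt b) \<le> (1 - (1/3) ^ length b) / 2"
proof (induction b)
  case Nil then show ?case by simp
next
  case (Cons x b)
  have "norm (zpt (x # b)) \<le> (1/3) * (norm (ee x) + norm (zpt b))"
    using norm_triangle_ineq[of "ee x" "zpt b"] by (simp add: zpt_Cons norm_mult norm_divide)
  also have "\<dots> \<le> (1/3) * (1 + (1 - (1/3) ^ length b) / 2)" using Cons by simp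
  also have "\<dots> = (1 - (1/3) ^ length (x#b)) / 2" by simp
  finally show ?case .
qed

definition pp :: "real \<Rightarrow> int list \<Rightarrow> real" where
  "pp \<theta> a = proj \<theta> (zpt a)"

lemma proj_add: "proj \<theta> (w + v) = proj \<theta> w + proj \<theta> v"
  by (simp add: proj_def algebra_simps)

lemma proj_scale: "proj \<theta> (complex_of_real c * w) = c * proj \<theta> w"
  by (simp add: proj_def mult.assoc)

lemma abs_proj: "\<bar>proj \<theta> w\<bar> \<le> norm w"
proof -
  have "norm (exp (- \<i> * complex_of_real \<theta>)) = 1"
    using norm_exp_i_times[of "-\<theta>"] by simp
  then show ?thesis unfolding proj_def
    using abs_Re_le_cmod[of "w * exp (- \<i> * complex_of_real \<theta>)"] by (simp add: norm_mult)
qed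

lemma pp_Nil[simp]: "pp \<theta> [] = 0" by (simp add: pp_def proj_def)

lemma pp_append: "pp \<theta> (a @ b) = pp \<theta> a + (1/3) ^ length a * pp \<theta> b"
  unfolding pp_def zpt_append proj_add proj_scale by simp

lemma abs_pp: "\<bar>pp \<theta> b\<bar> \<le> (1 - (1/3) ^ length b) / 2"
  using abs_proj[of \<theta> "zpt b"] norm_zpt[of b] unfolding pp_def by linarith

lemma pp_anc: "\<bar>pp \<theta> (a @ b) - pp \<theta> a\<bar> \<le> ((1/3) ^ length a - (1/3) ^ (length a + length b)) / 2"
proof -
  have "\<bar>pp \<theta> (a @ b) - pp \<theta> a\<bar> = (1/3) ^ length a * \<bar>pp \<theta> b\<bar>"
    by (simp add: pp_append abs_mult)
  also have "\<dots> \<le> (1/3) ^ length a * ((1 - (1/3) ^ length b) / 2)"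
    by (rule mult_left_mono[OF abs_pp]) simp
  also have "\<dots> = ((1/3) ^ length a - (1/3) ^ (length a + length b)) / 2"
    by (simp add: power_add algebra_simps)
  finally show ?thesis .
qed

lemma digits_alt: "digits n = {xs. set xs \<subseteq> {-1,0,1} \<and> length xs = n}"
  by (auto simp: digits_def)

lemma finite_digits[simp]: "finite (digits n)"
  unfolding digits_alt by (rule finite_lists_length_eq) simp

lemma card_digits: "card (digits n) = 3 ^ n"
  unfolding digits_alt by (subst card_lists_length_eq) (auto simp: numeral_3_eq_3)

lemma digits_append: "a \<in> digits m \<Longrightarrow> b \<in> digits k \<Longrightarrow> a @ b \<in> digits (m + k)"
  by (auto simp: digits_def)

lemma digits_take: "a \<in> digits n \<Longrightarrow> j \<le> n \<Longrightarrow> take j a \<in> digits j"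
  by (auto simp: digits_def dest: in_set_takeD)

lemma digits_drop: "a \<in> digits n \<Longrightarrow> drop j a \<in> digits (n - j)"
  by (auto simp: digits_def dest: in_set_dropD)

lemma digits_length: "a \<in> digits n \<Longrightarrow> length a = n"
  by (simp add: digits_def)

lemma digits_split_image:
  assumes "j \<le> n"
  shows "digits n = (\<lambda>(b, c). b @ c) ` (digits j \<times> digits (n - j))"
proof
  show "digits n \<subseteq> (\<lambda>(b, c). b @ c) ` (digits j \<times> digits (n - j))"
  proof
    fix a assume a: "a \<in> digits n"
    then have "a = (\<lambda>(b, c). b @ c) (take j a, drop j a)" by simp
    moreover have "(take j a, drop j a) \<in> digits j \<times> digits (n - j)"
      using a assms by (simp add: digits_take digits_drop)
    ultimately show "a \<in> (\<lambda>(b, c). b @ c) ` (digits j \<times> digits (n - j))" by blast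
  qed
next
  show "(\<lambda>(b, c). b @ c) ` (digits j \<times> digits (n - j)) \<subseteq> digits n"
    using assms by (auto dest: digits_append)
qed

lemma inj_on_append_digits: "inj_on (\<lambda>(b, c). b @ c) (digits j \<times> X)"
  by (auto simp: inj_on_def digits_def)

lemma sum_digits_split:
  assumes "j \<le> n"
  shows "(\<Sum>a\<in>digits n. h a) = (\<Sum>b\<in>digits j. \<Sum>c\<in>digits (n - j). h (b @ c))"
proof -
  have "(\<Sum>a\<in>digits n. h a) = (\<Sum>x\<in>digits j \<times> digits (n - j). h ((\<lambda>(b, c). b @ c) x))"
    by (subst digits_split_image[OF assms], rule sum.reindex[OF inj_on_append_digits, unfolded comp_def])
  also have "\<dots> = (\<Sum>b\<in>digits j. \<Sum>c\<in>digits (n - j). h (b @ c))"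
    by (subst sum.cartesian_product) (simp add: case_prod_beta)
  finally show ?thesis .
qed

lemma tri_help: "\<bar>(a::real) - b\<bar> \<le> d \<Longrightarrow> \<bar>a - u\<bar> < \<rho> \<Longrightarrow> \<bar>b - u\<bar> < \<rho> + d"
  by arith

lemma tri_help2: "\<bar>(x::real) - y\<bar> \<le> (A - B) / 2 \<Longrightarrow> B \<le> A \<Longrightarrow> \<bar>x - s\<bar> < B \<Longrightarrow> \<bar>y - s\<bar> < A"
  by (auto simp: abs_if split: if_splits)

lemma tri_lt:
  assumes "\<bar>(x::real) - y\<bar> < a" "\<bar>y - z\<bar> < b" shows "\<bar>x - z\<bar> < a + b"
proof -
  have "\<bar>x - z\<bar> \<le> \<bar>x - y\<bar> + \<bar>y - z\<bar>" using abs_triangle_ineq[of "x - y" "y - z"] by simp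
  then show ?thesis using assms by linarith
qed

lemma tri_le_lt:
  assumes "\<bar>(x::real) - y\<bar> \<le> a" "\<bar>y - z\<bar> < b" shows "\<bar>x - z\<bar> < a + b"
proof -
  have "\<bar>x - z\<bar> \<le> \<bar>x - y\<bar> + \<bar>y - z\<bar>" using abs_triangle_ineq[of "x - y" "y - z"] by simp
  then show ?thesis using assms by linarith
qed

lemma count_anc:
  assumes "k \<le> m"
  shows "card {b\<in>digits m. \<bar>pp \<theta> b - u\<bar> < \<rho>}
    \<le> 3 ^ k * card {c\<in>digits (m - k). \<bar>pp \<theta> c - u\<bar> < \<rho> + ((1/3) ^ (m - k) - (1/3) ^ m) / 2}"
proof -
  let ?S = "{c\<in>digits (m - k). \<bar>pp \<theta> c - u\<bar> < \<rho> + ((1/3) ^ (m - k) - (1/3) ^ m) / 2}"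
  have sub: "{b\<in>digits m. \<bar>pp \<theta> b - u\<bar> < \<rho>} \<subseteq> (\<lambda>(b, c). b @ c) ` (?S \<times> digits k)"
  proof
    fix b assume b: "b \<in> {b\<in>digits m. \<bar>pp \<theta> b - u\<bar> < \<rho>}"
    then have bd: "b \<in> digits m" and bu: "\<bar>pp \<theta> b - u\<bar> < \<rho>" by auto
    have lb: "length b = m" using bd digits_length by blast
    have "\<bar>pp \<theta> (take (m-k) b @ drop (m-k) b) - pp \<theta> (take (m-k) b)\<bar>
        \<le> ((1/3) ^ length (take (m-k) b) - (1/3) ^ (length (take (m-k) b) + length (drop (m-k) b))) / 2"
      by (rule pp_anc)
    also have "\<dots> = ((1/3) ^ (m - k) - (1/3) ^ m) / 2" using lb assms by simp
    finally have "\<bar>pp \<theta> b - pp \<theta> (take (m-k) b)\<bar> \<le> ((1/3) ^ (m - k) - (1/3) ^ m) / 2" by simp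
    then have "take (m-k) b \<in> ?S" using tri_help[OF _ bu] digits_take[OF bd, of "m-k"] by auto
    moreover have "drop (m-k) b \<in> digits k" using digits_drop[OF bd, of "m-k"] assms by simp
    ultimately have "(take (m-k) b, drop (m-k) b) \<in> ?S \<times> digits k" by simp
    moreover have "b = (\<lambda>(b, c). b @ c) (take (m-k) b, drop (m-k) b)" by simp
    ultimately show "b \<in> (\<lambda>(b, c). b @ c) ` (?S \<times> digits k)" by blast
  qed
  have "card {b\<in>digits m. \<bar>pp \<theta> b - u\<bar> < \<rho>} \<le> card ((\<lambda>(b, c). b @ c) ` (?S \<times> digits k))"
    by (rule card_mono[OF _ sub]) simp
  also have "\<dots> \<le> card (?S \<times> digits k)" by (rule card_image_le) simp
  also have "\<dots> = 3 ^ k * card ?S" by (simp add: card_cartesian_product card_digits)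
  finally show ?thesis .
qed

definition cnt :: "real \<Rightarrow> int list set \<Rightarrow> real \<Rightarrow> real \<Rightarrow> nat" where
  "cnt \<theta> S \<rho> s = card {a\<in>S. \<bar>pp \<theta> a - s\<bar> < \<rho>}"

lemma fmult_cnt: "fmult n \<theta> s = cnt \<theta> (digits n) ((1/3) ^ n) s"
  by (simp add: fmult_def cnt_def pp_def)

lemma card_filter_sum: "finite S \<Longrightarrow> card {a\<in>S. P a} = (\<Sum>a\<in>S. if P a then 1 else 0)"
  by (simp add: sum.inter_filter[symmetric])

lemma cnt_ind:
  assumes "finite S"
  shows "(of_nat (cnt \<theta> S \<rho> s) :: ennreal) = (\<Sum>a\<in>S. indicator (ball (pp \<theta> a) \<rho>) s)"
  unfolding cnt_def card_filter_sum[OF assms] of_nat_sum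
  by (intro sum.cong) (auto simp: indicator_def dist_real_def)

lemma cnt_ind_real:
  assumes "finite S"
  shows "(real (cnt \<theta> S \<rho> s)) = (\<Sum>a\<in>S. indicator (ball (pp \<theta> a) \<rho>) s)"
  unfolding cnt_def card_filter_sum[OF assms] of_nat_sum
  by (intro sum.cong) (auto simp: indicator_def dist_real_def)

lemma cnt_meas[measurable]:
  assumes "finite S"
  shows "(\<lambda>s. of_nat (cnt \<theta> S \<rho> s) :: ennreal) \<in> borel_measurable borel"
  unfolding cnt_ind[OF assms] by (rule borel_measurable_sum) (rule borel_measurable_indicator, simp)

lemma cnt_meas_real[measurable]:
  assumes "finite S"
  shows "(\<lambda>s. real (cnt \<theta> S \<rho> s)) \<in> borel_measurable borel"
  unfolding cnt_ind_real[OF assms] by (rule borel_measurable_sum) (rule borel_measurable_indicator, simp)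

lemma emeasure_ball: "r \<ge> 0 \<Longrightarrow> emeasure lborel (ball (c::real) r) = ennreal (2 * r)"
proof -
  assume "r \<ge> 0"
  have "ball c r = {c - r<..<c + r}" by (auto simp: dist_real_def)
  then show ?thesis using \<open>r \<ge> 0\<close> by (simp add: emeasure_lborel_Ioo)
qed

lemma cnt_shift:
  assumes "length b = j"
  shows "cnt \<theta> ((\<lambda>c. b @ c) ` digits k) ((1/3) ^ (j + k)) s
       = cnt \<theta> (digits k) ((1/3) ^ k) (3 ^ j * (s - pp \<theta> b))"
proof -
  have eq: "\<bar>pp \<theta> (b @ c) - s\<bar> < (1/3) ^ (j + k) \<longleftrightarrow> \<bar>pp \<theta> c - 3 ^ j * (s - pp \<theta> b)\<bar> < (1/3) ^ k" for c
  proof -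
    have "pp \<theta> (b @ c) - s = (1/3) ^ j * (pp \<theta> c - 3 ^ j * (s - pp \<theta> b))"
      using assms by (simp add: pp_append algebra_simps power_one_over)
    then have "\<bar>pp \<theta> (b @ c) - s\<bar> = (1/3) ^ j * \<bar>pp \<theta> c - 3 ^ j * (s - pp \<theta> b)\<bar>"
      by (simp add: abs_mult)
    then show ?thesis by (simp add: power_add mult_less_cancel_left_pos)
  qed
  have "{a \<in> (\<lambda>c. b @ c) ` digits k. \<bar>pp \<theta> a - s\<bar> < (1/3) ^ (j + k)}
      = (\<lambda>c. b @ c) ` {c \<in> digits k. \<bar>pp \<theta> c - 3 ^ j * (s - pp \<theta> b)\<bar> < (1/3) ^ k}"
    using eq by auto
  moreover have "inj_on (\<lambda>c. b @ c) X" for X by (simp add: inj_on_def)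
  ultimately show ?thesis unfolding cnt_def by (simp add: card_image)
qed

definition Mq :: "real \<Rightarrow> nat \<Rightarrow> ennreal" where
  "Mq \<theta> n = (\<integral>\<^sup>+ s. (of_nat (fmult n \<theta> s))\<^sup>2 \<partial>lborel)"

lemma Mq_shift:
  assumes "length b = j"
  shows "(\<integral>\<^sup>+ s. (of_nat (cnt \<theta> ((\<lambda>c. b @ c) ` digits k) ((1/3) ^ (j + k)) s))\<^sup>2 \<partial>lborel)
     = ennreal ((1/3) ^ j) * Mq \<theta> k"
proof -
  let ?f = "\<lambda>t. (of_nat (cnt \<theta> (digits k) ((1/3) ^ k) t) :: ennreal)\<^sup>2"
  have m: "?f \<in> borel_measurable borel" by measurable
  have "Mq \<theta> k = (\<integral>\<^sup>+ t. ?f t \<partial>lborel)" by (simp add: Mq_def fmult_cnt)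
  also have "\<dots> = ennreal (3 ^ j) * (\<integral>\<^sup>+ x. ?f (- (3 ^ j * pp \<theta> b) + 3 ^ j * x) \<partial>lborel)"
    using nn_integral_real_affine[OF m, where c="3^j" and t="- (3 ^ j * pp \<theta> b)"] by simp
  also have "(\<integral>\<^sup>+ x. ?f (- (3 ^ j * pp \<theta> b) + 3 ^ j * x) \<partial>lborel)
     = (\<integral>\<^sup>+ s. (of_nat (cnt \<theta> ((\<lambda>c. b @ c) ` digits k) ((1/3) ^ (j + k)) s))\<^sup>2 \<partial>lborel)"
    by (simp add: cnt_shift[OF assms] algebra_simps)
  finally have *: "Mq \<theta> k = ennreal (3 ^ j) * (\<integral>\<^sup>+ s. (of_nat (cnt \<theta> ((\<lambda>c. b @ c) ` digits k) ((1/3) ^ (j + k)) s))\<^sup>2 \<partial>lborel)"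
    by simp
  have "ennreal ((1/3) ^ j) * ennreal (3 ^ j) = 1"
    by (simp add: ennreal_mult''[symmetric] power_one_over)
  then show ?thesis unfolding * by (simp add: mult.assoc[symmetric])
qed

lemma half_two: "ennreal (1/2) * (ennreal 2 * x) = x"
proof -
  have "ennreal (1/2) * (ennreal 2 * x) = (ennreal (1/2) * ennreal 2) * x" by (simp only: mult.assoc)
  also have "ennreal (1/2) * ennreal 2 = 1" by (subst ennreal_mult[symmetric]) auto
  finally show ?thesis by simp
qed

lemma Mq_decomp:
  "Mq \<theta> N = (\<Sum>a\<in>digits N. \<integral>\<^sup>+ s. indicator (ball (pp \<theta> a) ((1/3)^N)) s * of_nat (fmult N \<theta> s) \<partial>lborel)"
proof -
  have "Mq \<theta> N = (\<integral>\<^sup>+ s. (\<Sum>a\<in>digits N. indicator (ball (pp \<theta> a) ((1/3)^N)) s * of_nat (fmult N \<theta> s)) \<partial>lborel)"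
    unfolding Mq_def power2_eq_square
    by (rule nn_integral_cong) (simp add: sum_distrib_right[symmetric] fmult_cnt cnt_ind)
  also have "\<dots> = (\<Sum>a\<in>digits N. \<integral>\<^sup>+ s. indicator (ball (pp \<theta> a) ((1/3)^N)) s * of_nat (fmult N \<theta> s) \<partial>lborel)"
    by (rule nn_integral_sum) (rule borel_measurable_times_ennreal[OF borel_measurable_indicator], simp_all add: fmult_cnt)
  finally show ?thesis .
qed

lemma cnt_nonzero: "cnt \<theta> S \<rho> s \<noteq> 0 \<Longrightarrow> finite S \<Longrightarrow> \<exists>a\<in>S. \<bar>pp \<theta> a - s\<bar> < \<rho>"
  unfolding cnt_def by (metis (mono_tags, lifting) card.empty empty_Collect_eq)

lemma amgm_enn: "(of_nat a :: ennreal) * of_nat b \<le> ennreal (1/2) * ((of_nat a)\<^sup>2 + (of_nat b)\<^sup>2)"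
proof -
  have "(of_nat a :: ennreal) * of_nat b = ennreal (real a * real b)"
    by (simp add: ennreal_of_nat_eq_real_of_nat ennreal_mult)
  also have "\<dots> \<le> ennreal (1/2 * ((real a)\<^sup>2 + (real b)\<^sup>2))"
  proof (rule ennreal_leI)
    have "0 \<le> (real a - real b)\<^sup>2" by simp
    then show "real a * real b \<le> 1/2 * ((real a)\<^sup>2 + (real b)\<^sup>2)"
      by (simp add: power2_eq_square algebra_simps)
  qed
  also have "\<dots> = ennreal (1/2) * ennreal ((real a)\<^sup>2 + (real b)\<^sup>2)"
    by (rule ennreal_mult) auto
  also have "ennreal ((real a)\<^sup>2 + (real b)\<^sup>2) = ennreal ((real a)\<^sup>2) + ennreal ((real b)\<^sup>2)"
    by (rule ennreal_plus) auto
  also have "ennreal ((real a)\<^sup>2) = (of_nat a)\<^sup>2"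
    unfolding ennreal_power[symmetric, OF of_nat_0_le_iff] ennreal_of_nat_eq_real_of_nat ..
  also have "ennreal ((real b)\<^sup>2) = (of_nat b)\<^sup>2"
    unfolding ennreal_power[symmetric, OF of_nat_0_le_iff] ennreal_of_nat_eq_real_of_nat ..
  finally show ?thesis .
qed

lemma block_bound:
  assumes bd: "b \<in> digits j" and jN: "j \<le> N"
  shows "(\<Sum>c\<in>digits (N-j). \<integral>\<^sup>+ s. indicator (ball (pp \<theta> (b@c)) ((1/3)^N)) s * of_nat (fmult N \<theta> s) \<partial>lborel)
    \<le> of_nat (card {b'\<in>digits j. \<bar>pp \<theta> b' - pp \<theta> b\<bar> < 2 * (1/3)^j}) * (ennreal ((1/3)^j) * Mq \<theta> (N-j))"
proof -
  define D where "D = digits (N - j)"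
  define G where "G b s = (of_nat (cnt \<theta> ((\<lambda>c. b @ c) ` D) ((1/3)^N) s) :: ennreal)" for b s
  define F where "F s = (of_nat (fmult N \<theta> s) :: ennreal)" for s
  have injb: "inj_on (\<lambda>c. b @ c) X" for b X by (simp add: inj_on_def)
  have Gsum: "G b s = (\<Sum>c\<in>D. indicator (ball (pp \<theta> (b@c)) ((1/3)^N)) s)" for b s
    unfolding G_def by (simp add: cnt_ind sum.reindex[OF injb] D_def)
  have Gm[measurable]: "G b \<in> borel_measurable borel" for b
    unfolding G_def[abs_def] by (simp add: D_def)
  have Fm[measurable]: "F \<in> borel_measurable borel"
    unfolding F_def[abs_def] by (simp add: fmult_cnt)
  have Fsum: "F s = (\<Sum>b\<in>digits j. G b s)" for s
    unfolding F_def fmult_cnt cnt_ind[OF finite_digits] Gsum D_def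
    by (rule sum_digits_split[OF jN])
  have step1: "(\<Sum>c\<in>D. \<integral>\<^sup>+ s. indicator (ball (pp \<theta> (b@c)) ((1/3)^N)) s * F s \<partial>lborel) = (\<integral>\<^sup>+ s. G b s * F s \<partial>lborel)"
    unfolding Gsum sum_distrib_right
    by (rule nn_integral_sum[symmetric]) (rule borel_measurable_times_ennreal[OF borel_measurable_indicator], simp_all)
  have step3: "(\<integral>\<^sup>+ s. G b s * F s \<partial>lborel) = (\<Sum>b'\<in>digits j. \<integral>\<^sup>+ s. G b s * G b' s \<partial>lborel)"
    unfolding Fsum sum_distrib_left
    by (rule nn_integral_sum) simp
  have lenb: "length b = j" using bd digits_length by blast
  have sq: "(\<integral>\<^sup>+ s. (G b' s)\<^sup>2 \<partial>lborel) = ennreal ((1/3)^j) * Mq \<theta> (N-j)" if "b' \<in> digits j" for b'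
  proof -
    have "length b' = j" using that digits_length by blast
    from Mq_shift[OF this, of \<theta> "N-j"] show ?thesis using jN by (simp add: G_def D_def)
  qed
  have supp: "\<bar>pp \<theta> b' - s\<bar> < (1/3)^j" if "b' \<in> digits j" "G b' s \<noteq> 0" for b' s
  proof -
    have "cnt \<theta> ((\<lambda>c. b' @ c) ` D) ((1/3)^N) s \<noteq> 0" using that(2) by (simp add: G_def)
    from cnt_nonzero[OF this] obtain a where "a \<in> (\<lambda>c. b' @ c) ` D" "\<bar>pp \<theta> a - s\<bar> < (1/3)^N"
      by (auto simp: D_def)
    then obtain c where c: "c \<in> D" "\<bar>pp \<theta> (b' @ c) - s\<bar> < (1/3)^N" by auto
    have lb': "length b' = j" "length c = N - j" using that(1) c(1) digits_length D_def by auto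
    have "\<bar>pp \<theta> (b' @ c) - pp \<theta> b'\<bar> \<le> ((1/3)^j - (1/3)^N) / 2"
      using pp_anc[of \<theta> b' c] lb' jN by simp
    moreover have "(1/3::real)^N \<le> (1/3)^j" using jN by (simp add: power_decreasing)
    ultimately show ?thesis using c(2) by (rule tri_help2)
  qed
  have trm: "(\<integral>\<^sup>+ s. G b s * G b' s \<partial>lborel)
     \<le> (if \<bar>pp \<theta> b' - pp \<theta> b\<bar> < 2 * (1/3)^j then ennreal ((1/3)^j) * Mq \<theta> (N-j) else 0)"
    if b'd: "b' \<in> digits j" for b'
  proof (cases "\<bar>pp \<theta> b' - pp \<theta> b\<bar> < 2 * (1/3)^j")
    case True
    have "(\<integral>\<^sup>+ s. G b s * G b' s \<partial>lborel) \<le> (\<integral>\<^sup>+ s. ennreal (1/2) * ((G b s)\<^sup>2 + (G b' s)\<^sup>2) \<partial>lborel)"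
      by (rule nn_integral_mono) (unfold G_def, rule amgm_enn)
    also have "\<dots> = ennreal (1/2) * ((\<integral>\<^sup>+ s. (G b s)\<^sup>2 \<partial>lborel) + (\<integral>\<^sup>+ s. (G b' s)\<^sup>2 \<partial>lborel))"
      by (simp add: nn_integral_cmult nn_integral_add)
    also have "\<dots> = ennreal (1/2) * (ennreal ((1/3)^j) * Mq \<theta> (N-j) + ennreal ((1/3)^j) * Mq \<theta> (N-j))"
      using sq[OF bd] sq[OF b'd] by simp
    also have "\<dots> = ennreal ((1/3)^j) * Mq \<theta> (N-j)"
    proof -
      have "ennreal (1/2) * (x + x) = x" for x :: ennreal
      proof -
        have "x + x = ennreal 2 * x" by (simp add: mult_2[symmetric])
        then have "ennreal (1/2) * (x + x) = (ennreal (1/2) * ennreal 2) * x" by (simp only: mult.assoc)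
        also have "ennreal (1/2) * ennreal 2 = 1" by (subst ennreal_mult[symmetric]) auto
        finally show ?thesis by simp
      qed
      then show ?thesis .
    qed
    finally show ?thesis using True by simp
  next
    case False
    have "G b s * G b' s = 0" for s
    proof (rule ccontr)
      assume "G b s * G b' s \<noteq> 0"
      then have "G b s \<noteq> 0" "G b' s \<noteq> 0" by auto
      from supp[OF bd this(1)] supp[OF b'd this(2)] False show False by arith
    qed
    then have "(\<lambda>s. G b s * G b' s) = (\<lambda>s. 0)" by auto
    then show ?thesis using False by simp
  qed
  have "(\<Sum>c\<in>digits (N-j). \<integral>\<^sup>+ s. indicator (ball (pp \<theta> (b@c)) ((1/3)^N)) s * of_nat (fmult N \<theta> s) \<partial>lborel)
      = (\<Sum>b'\<in>digits j. \<integral>\<^sup>+ s. G b s * G b' s \<partial>lborel)"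
    using step1 step3 by (simp add: F_def D_def)
  also have "\<dots> \<le> (\<Sum>b'\<in>digits j. (if \<bar>pp \<theta> b' - pp \<theta> b\<bar> < 2 * (1/3)^j then ennreal ((1/3)^j) * Mq \<theta> (N-j) else 0))"
    by (rule sum_mono) (rule trm)
  also have "\<dots> = of_nat (card {b'\<in>digits j. \<bar>pp \<theta> b' - pp \<theta> b\<bar> < 2 * (1/3)^j}) * (ennreal ((1/3)^j) * Mq \<theta> (N-j))"
    by (simp add: sum.inter_filter[symmetric])
  finally show ?thesis .
qed

definition AA :: "real \<Rightarrow> nat \<Rightarrow> real \<Rightarrow> real set" where
  "AA \<theta> N K = {s. K \<le> real (fstar N \<theta> s)}"

lemma fmult_le_fstar: "j \<le> N \<Longrightarrow> fmult j \<theta> s \<le> fstar N \<theta> s"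
  unfolding fstar_def by (rule Max_ge) auto

lemma fstar_attained: "\<exists>j\<le>N. fstar N \<theta> s = fmult j \<theta> s"
proof -
  have "fstar N \<theta> s \<in> (\<lambda>n. fmult n \<theta> s) ` {0..N}"
    unfolding fstar_def by (rule Max_in) auto
  then show ?thesis by auto
qed

lemma notAA: "s \<notin> AA \<theta> N K \<Longrightarrow> j \<le> N \<Longrightarrow> real (fmult j \<theta> s) < K"
  unfolding AA_def using fmult_le_fstar[of j N \<theta> s] by (auto simp del: of_nat_le_iff; meson not_le of_nat_le_iff order_trans)

lemma AA_mono: "N' \<le> N \<Longrightarrow> AA \<theta> N' K \<subseteq> AA \<theta> N K"
proof
  fix s assume "N' \<le> N" "s \<in> AA \<theta> N' K"
  obtain j where "j \<le> N'" "fstar N' \<theta> s = fmult j \<theta> s" using fstar_attained by blast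
  then have "fstar N' \<theta> s \<le> fstar N \<theta> s" using fmult_le_fstar[of j N \<theta> s] \<open>N' \<le> N\<close> by simp
  then show "s \<in> AA \<theta> N K" using \<open>s \<in> AA \<theta> N' K\<close> unfolding AA_def
    by (simp del: of_nat_le_iff; meson of_nat_le_iff order_trans)
qed

lemma AA_eq: "AA \<theta> N K = (\<Union>j\<in>{0..N}. {s. K \<le> real (fmult j \<theta> s)})"
proof
  show "AA \<theta> N K \<subseteq> (\<Union>j\<in>{0..N}. {s. K \<le> real (fmult j \<theta> s)})"
  proof
    fix s assume "s \<in> AA \<theta> N K"
    obtain j where "j \<le> N" "fstar N \<theta> s = fmult j \<theta> s" using fstar_attained by blast
    then show "s \<in> (\<Union>j\<in>{0..N}. {s. K \<le> real (fmult j \<theta> s)})" using \<open>s \<in> AA \<theta> N K\<close>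
      unfolding AA_def by auto
  qed
next
  show "(\<Union>j\<in>{0..N}. {s. K \<le> real (fmult j \<theta> s)}) \<subseteq> AA \<theta> N K"
    unfolding AA_def using fmult_le_fstar
    by (auto simp del: of_nat_le_iff) (meson of_nat_le_iff order_trans)
qed

lemma AA_sets[measurable]: "AA \<theta> N K \<in> sets lborel"
proof -
  have "{s. K \<le> real (fmult j \<theta> s)} \<in> sets borel" for j
  proof -
    have "(\<lambda>s. real (fmult j \<theta> s)) \<in> borel_measurable borel" by (simp add: fmult_cnt)
    then show ?thesis by measurable
  qed
  then show ?thesis unfolding AA_eq by auto
qed

lemma pow3_sub:
  assumes "k \<le> m" shows "(1/3::real) ^ (m - k) = 3 ^ k * (1/3) ^ m"
proof -
  have e1: "(1/3::real) ^ m = (1/3) ^ k * (1/3) ^ (m - k)" using assms by (simp add: power_add[symmetric])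
  have e2: "(3::real) ^ k * (1/3) ^ k = 1" by (simp add: power_mult_distrib[symmetric])
  have "(3::real) ^ k * (1/3) ^ m = ((3::real) ^ k * (1/3) ^ k) * (1/3) ^ (m - k)"
    unfolding e1 by (simp only: mult.assoc)
  then show ?thesis using e2 by simp
qed

definition bad :: "real \<Rightarrow> nat \<Rightarrow> real \<Rightarrow> int list \<Rightarrow> bool" where
  "bad \<theta> N K b \<longleftrightarrow> ball (pp \<theta> b) (3 * (1/3) ^ length b) \<subseteq> AA \<theta> N K"

definition Mset :: "real \<Rightarrow> nat \<Rightarrow> real \<Rightarrow> nat \<Rightarrow> int list set" where
  "Mset \<theta> N K j = {b\<in>digits j. bad \<theta> N K b \<and> \<not> bad \<theta> N K (take (j - 1) b)}"

lemma finite_Mset[simp]: "finite (Mset \<theta> N K j)"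
  unfolding Mset_def by simp

context
  fixes \<theta> K :: real and N :: nat
  assumes Kge: "K \<ge> 1" and hyp: "emeasure lborel (AA \<theta> N K) \<le> ennreal (1 / K ^ 3)"
begin

lemma root_not_bad: "\<not> bad \<theta> N K []"
proof
  assume "bad \<theta> N K []"
  then have "ball 0 3 \<subseteq> AA \<theta> N K" by (simp add: bad_def)
  then have "emeasure lborel (ball (0::real) 3) \<le> emeasure lborel (AA \<theta> N K)"
    by (rule emeasure_mono) (use AA_sets in simp)
  also have "\<dots> \<le> ennreal (1 / K ^ 3)" by (rule hyp)
  also have "\<dots> \<le> ennreal 1"
    using Kge by (intro ennreal_leI) (simp add: one_le_power)
  finally have "ennreal 6 \<le> ennreal 1" by (simp add: emeasure_ball)
  then show False by (simp add: ennreal_le_iff2)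
qed

lemma near_count:
  assumes u: "u \<notin> AA \<theta> N K" and mN: "m \<le> N"
  shows "real (card {b\<in>digits m. \<bar>pp \<theta> b - u\<bar> < 12 * (1/3) ^ m}) \<le> 27 * K"
proof (cases "m \<ge> 3")
  case True
  have "card {b\<in>digits m. \<bar>pp \<theta> b - u\<bar> < 12 * (1/3) ^ m}
     \<le> 3 ^ 3 * card {c\<in>digits (m - 3). \<bar>pp \<theta> c - u\<bar> < 12 * (1/3) ^ m + ((1/3) ^ (m - 3) - (1/3) ^ m) / 2}"
    by (rule count_anc) (rule True)
  also have "card {c\<in>digits (m - 3). \<bar>pp \<theta> c - u\<bar> < 12 * (1/3) ^ m + ((1/3) ^ (m - 3) - (1/3) ^ m) / 2}
     \<le> card {c\<in>digits (m - 3). \<bar>pp \<theta> c - u\<bar> < (1/3) ^ (m - 3)}"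
  proof (rule card_mono)
    have e: "(1/3::real) ^ (m - 3) = 27 * (1/3) ^ m"
      using pow3_sub[OF True] by simp
    show "{c\<in>digits (m - 3). \<bar>pp \<theta> c - u\<bar> < 12 * (1/3) ^ m + ((1/3) ^ (m - 3) - (1/3) ^ m) / 2}
      \<subseteq> {c\<in>digits (m - 3). \<bar>pp \<theta> c - u\<bar> < (1/3) ^ (m - 3)}"
      unfolding e by auto
  qed simp
  also have "card {c\<in>digits (m - 3). \<bar>pp \<theta> c - u\<bar> < (1/3) ^ (m - 3)} = fmult (m - 3) \<theta> u"
    by (simp add: fmult_cnt cnt_def)
  finally have c27: "card {b\<in>digits m. \<bar>pp \<theta> b - u\<bar> < 12 * (1/3) ^ m} \<le> 27 * fmult (m - 3) \<theta> u"
    by simp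
  have "real (card {b\<in>digits m. \<bar>pp \<theta> b - u\<bar> < 12 * (1/3) ^ m}) \<le> 27 * real (fmult (m - 3) \<theta> u)"
    using of_nat_le_iff[where 'a=real, THEN iffD2, OF c27] by simp
  also have "\<dots> \<le> 27 * K"
  proof -
    have "real (fmult (m - 3) \<theta> u) < K" using notAA[OF u, of "m - 3"] mN by simp
    then show ?thesis by simp
  qed
  finally show ?thesis .
next
  case False
  have "card {b\<in>digits m. \<bar>pp \<theta> b - u\<bar> < 12 * (1/3) ^ m} \<le> card (digits m)"
    by (rule card_mono) auto
  also have "\<dots> = 3 ^ m" by (rule card_digits)
  also have "\<dots> \<le> 3 ^ 2" using False by (intro power_increasing) auto
  finally have "card {b\<in>digits m. \<bar>pp \<theta> b - u\<bar> < 12 * (1/3) ^ m} \<le> 9" by simp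
  then have "real (card {b\<in>digits m. \<bar>pp \<theta> b - u\<bar> < 12 * (1/3) ^ m}) \<le> 9"
    using of_nat_le_iff[where 'a=real, THEN iffD2] by fastforce
  then show ?thesis using Kge by linarith
qed

lemma good_bound:
  assumes ad: "a \<in> digits N" and nb: "\<not> bad \<theta> N K a" and s: "\<bar>pp \<theta> a - s\<bar> < (1/3) ^ N"
  shows "real (fmult N \<theta> s) \<le> 9 * K"
proof -
  have la: "length a = N" using ad digits_length by blast
  have "\<not> ball (pp \<theta> a) (3 * (1/3) ^ N) \<subseteq> AA \<theta> N K" using nb la unfolding bad_def by simp
  then obtain u where u: "u \<in> ball (pp \<theta> a) (3 * (1/3) ^ N)" "u \<notin> AA \<theta> N K" by blast
  have "fmult N \<theta> s = card {b\<in>digits N. \<bar>pp \<theta> b - s\<bar> < (1/3) ^ N}"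
    by (simp add: fmult_cnt cnt_def)
  also have "\<dots> \<le> card {b\<in>digits N. \<bar>pp \<theta> b - u\<bar> < 5 * (1/3) ^ N}"
  proof (rule card_mono)
    show "{b\<in>digits N. \<bar>pp \<theta> b - s\<bar> < (1/3) ^ N} \<subseteq> {b\<in>digits N. \<bar>pp \<theta> b - u\<bar> < 5 * (1/3) ^ N}"
    proof safe
      fix b assume "b \<in> digits N" "\<bar>pp \<theta> b - s\<bar> < (1/3) ^ N"
      moreover have "\<bar>s - pp \<theta> a\<bar> < (1/3) ^ N" using s by (simp add: abs_minus_commute)
      moreover have "\<bar>pp \<theta> a - u\<bar> < 3 * (1/3) ^ N" using u(1) by (simp add: dist_real_def)
      ultimately have "\<bar>pp \<theta> b - u\<bar> < (1/3) ^ N + (1/3) ^ N + 3 * (1/3) ^ N"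
        by (meson tri_lt)
      then show "\<bar>pp \<theta> b - u\<bar> < 5 * (1/3) ^ N" by simp
    qed
  qed simp
  finally have c1: "fmult N \<theta> s \<le> card {b\<in>digits N. \<bar>pp \<theta> b - u\<bar> < 5 * (1/3) ^ N}" .
  show ?thesis
  proof (cases "N \<ge> 2")
    case True
    have e: "(1/3::real) ^ (N - 2) = 9 * (1/3) ^ N"
      using pow3_sub[OF True] by simp
    have "card {b\<in>digits N. \<bar>pp \<theta> b - u\<bar> < 5 * (1/3) ^ N}
      \<le> 3 ^ 2 * card {c\<in>digits (N - 2). \<bar>pp \<theta> c - u\<bar> < 5 * (1/3) ^ N + ((1/3) ^ (N - 2) - (1/3) ^ N) / 2}"
      by (rule count_anc) (rule True)
    also have "{c\<in>digits (N - 2). \<bar>pp \<theta> c - u\<bar> < 5 * (1/3) ^ N + ((1/3) ^ (N - 2) - (1/3) ^ N) / 2}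
       = {c\<in>digits (N - 2). \<bar>pp \<theta> c - u\<bar> < (1/3) ^ (N - 2)}"
      unfolding e by (auto simp: algebra_simps)
    also have "card {c\<in>digits (N - 2). \<bar>pp \<theta> c - u\<bar> < (1/3) ^ (N - 2)} = fmult (N - 2) \<theta> u"
      by (simp add: fmult_cnt cnt_def)
    finally have c27: "fmult N \<theta> s \<le> 9 * fmult (N - 2) \<theta> u" using c1 by simp
    have "real (fmult N \<theta> s) \<le> 9 * real (fmult (N - 2) \<theta> u)"
      using of_nat_le_iff[where 'a=real, THEN iffD2, OF c27] by simp
    also have "\<dots> \<le> 9 * K"
    proof -
      have "real (fmult (N - 2) \<theta> u) < K" using notAA[OF u(2), of "N - 2"] by simp
      then show ?thesis by simp
    qed
    finally show ?thesis .
  next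
    case False
    have "fmult N \<theta> s \<le> card (digits N)" unfolding fmult_cnt cnt_def by (rule card_mono) auto
    also have "\<dots> = 3 ^ N" by (rule card_digits)
    also have "\<dots> \<le> 3 ^ 1" using False by (intro power_increasing) auto
    finally have "fmult N \<theta> s \<le> 3" by simp
    then have "real (fmult N \<theta> s) \<le> 3"
      using of_nat_le_iff[where 'a=real, THEN iffD2] by fastforce
    then show ?thesis using Kge by linarith
  qed
qed

lemma Mset_witness:
  assumes b: "b \<in> Mset \<theta> N K j"
  shows "\<exists>u. u \<notin> AA \<theta> N K \<and> \<bar>pp \<theta> b - u\<bar> < 10 * (1/3) ^ j"
proof -
  have bd: "b \<in> digits j" and bb: "bad \<theta> N K b" and nb: "\<not> bad \<theta> N K (take (j - 1) b)"
    using b by (auto simp: Mset_def)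
  have lb: "length b = j" using bd digits_length by blast
  have j0: "j \<noteq> 0"
  proof
    assume "j = 0"
    then have "b = []" using lb by simp
    then show False using bb root_not_bad by simp
  qed
  have e: "(1/3::real) ^ (j - 1) = 3 * (1/3) ^ j"
    using pow3_sub[of 1 j] j0 by simp
  have "\<not> ball (pp \<theta> (take (j-1) b)) (3 * (1/3) ^ (j - 1)) \<subseteq> AA \<theta> N K"
    using nb lb unfolding bad_def by simp
  then obtain u where u: "u \<in> ball (pp \<theta> (take (j-1) b)) (3 * (1/3) ^ (j - 1))" "u \<notin> AA \<theta> N K" by blast
  have "\<bar>pp \<theta> (take (j-1) b @ drop (j-1) b) - pp \<theta> (take (j-1) b)\<bar>
      \<le> ((1/3) ^ length (take (j-1) b) - (1/3) ^ (length (take (j-1) b) + length (drop (j-1) b))) / 2"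
    by (rule pp_anc)
  also have "\<dots> = ((1/3) ^ (j - 1) - (1/3) ^ j) / 2" using lb j0 by simp
  finally have d: "\<bar>pp \<theta> b - pp \<theta> (take (j-1) b)\<bar> \<le> (1/3) ^ j" unfolding e by simp
  have "\<bar>pp \<theta> b - u\<bar> < 10 * (1/3) ^ j"
  proof -
    have "\<bar>pp \<theta> (take (j-1) b) - u\<bar> < 9 * (1/3) ^ j" using u(1) unfolding e by (simp add: dist_real_def)
    from tri_le_lt[OF d this] show ?thesis by simp
  qed
  then show ?thesis using u(2) by blast
qed

lemma Mset_near:
  assumes b: "b \<in> Mset \<theta> N K j" and jN: "j \<le> N"
  shows "real (card {b'\<in>digits j. \<bar>pp \<theta> b' - pp \<theta> b\<bar> < 2 * (1/3)^j}) \<le> 27 * K"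
proof -
  obtain u where u: "u \<notin> AA \<theta> N K" "\<bar>pp \<theta> b - u\<bar> < 10 * (1/3) ^ j"
    using Mset_witness[OF b] by blast
  have "card {b'\<in>digits j. \<bar>pp \<theta> b' - pp \<theta> b\<bar> < 2 * (1/3)^j} \<le> card {b'\<in>digits j. \<bar>pp \<theta> b' - u\<bar> < 12 * (1/3) ^ j}"
  proof (rule card_mono)
    show "{b'\<in>digits j. \<bar>pp \<theta> b' - pp \<theta> b\<bar> < 2 * (1/3)^j} \<subseteq> {b'\<in>digits j. \<bar>pp \<theta> b' - u\<bar> < 12 * (1/3) ^ j}"
    proof safe
      fix b' assume "\<bar>pp \<theta> b' - pp \<theta> b\<bar> < 2 * (1/3)^j"
      from tri_lt[OF this u(2)] show "\<bar>pp \<theta> b' - u\<bar> < 12 * (1/3) ^ j" by simp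
    qed
  qed simp
  then have "real (card {b'\<in>digits j. \<bar>pp \<theta> b' - pp \<theta> b\<bar> < 2 * (1/3)^j}) \<le> real (card {b'\<in>digits j. \<bar>pp \<theta> b' - u\<bar> < 12 * (1/3) ^ j})"
    by simp
  also have "\<dots> \<le> 27 * K" by (rule near_count[OF u(1) jN])
  finally show ?thesis .
qed


lemma Mset_in_AA:
  assumes "b \<in> Mset \<theta> N K j" "\<bar>pp \<theta> b - t\<bar> < 3 * (1/3) ^ j"
  shows "t \<in> AA \<theta> N K"
proof -
  have "length b = j" "bad \<theta> N K b" using assms(1) digits_length by (auto simp: Mset_def)
  then have "ball (pp \<theta> b) (3 * (1/3) ^ j) \<subseteq> AA \<theta> N K" by (simp add: bad_def)
  moreover have "t \<in> ball (pp \<theta> b) (3 * (1/3) ^ j)" using assms(2) by (simp add: dist_real_def)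
  ultimately show ?thesis by blast
qed

lemma level_count:
  assumes jN: "j \<le> N"
  shows "real (card {b\<in>Mset \<theta> N K j. \<bar>pp \<theta> b - t\<bar> < (1/3)^j}) \<le> 27 * K"
proof (cases "{b\<in>Mset \<theta> N K j. \<bar>pp \<theta> b - t\<bar> < (1/3)^j} = {}")
  case True
  have c0: "card {b\<in>Mset \<theta> N K j. \<bar>pp \<theta> b - t\<bar> < (1/3)^j} = 0" by (subst True) simp
  show ?thesis unfolding c0 using Kge by simp
next
  case False
  then obtain b0 where b0: "b0 \<in> Mset \<theta> N K j" "\<bar>pp \<theta> b0 - t\<bar> < (1/3)^j" by auto
  obtain u where u: "u \<notin> AA \<theta> N K" "\<bar>pp \<theta> b0 - u\<bar> < 10 * (1/3) ^ j"
    using Mset_witness[OF b0(1)] by blast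
  have "card {b\<in>Mset \<theta> N K j. \<bar>pp \<theta> b - t\<bar> < (1/3)^j} \<le> card {b\<in>digits j. \<bar>pp \<theta> b - u\<bar> < 12 * (1/3) ^ j}"
  proof (rule card_mono)
    show "{b\<in>Mset \<theta> N K j. \<bar>pp \<theta> b - t\<bar> < (1/3)^j} \<subseteq> {b\<in>digits j. \<bar>pp \<theta> b - u\<bar> < 12 * (1/3) ^ j}"
    proof safe
      fix b assume "b \<in> Mset \<theta> N K j" "\<bar>pp \<theta> b - t\<bar> < (1/3)^j"
      then show "b \<in> digits j" by (simp add: Mset_def)
      have "\<bar>t - pp \<theta> b0\<bar> < (1/3)^j" using b0(2) by (simp add: abs_minus_commute)
      from tri_lt[OF tri_lt[OF \<open>\<bar>pp \<theta> b - t\<bar> < (1/3)^j\<close> this] u(2)]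
      show "\<bar>pp \<theta> b - u\<bar> < 12 * (1/3) ^ j" by simp
    qed
  qed simp
  then have "real (card {b\<in>Mset \<theta> N K j. \<bar>pp \<theta> b - t\<bar> < (1/3)^j}) \<le> real (card {b\<in>digits j. \<bar>pp \<theta> b - u\<bar> < 12 * (1/3) ^ j})"
    by simp
  also have "\<dots> \<le> 27 * K" by (rule near_count[OF u(1) jN])
  finally show ?thesis .
qed

lemma level_gap:
  assumes b1: "b1 \<in> Mset \<theta> N K j1" "\<bar>pp \<theta> b1 - t\<bar> < (1/3)^j1"
    and b2: "b2 \<in> Mset \<theta> N K j2" "\<bar>pp \<theta> b2 - t\<bar> < (1/3)^j2"
    and gap: "j1 + 2 \<le> j2"
  shows False
proof -
  obtain u where u: "u \<notin> AA \<theta> N K" "\<bar>pp \<theta> b2 - u\<bar> < 10 * (1/3) ^ j2"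
    using Mset_witness[OF b2(1)] by blast
  have r: "(1/3::real) ^ j2 \<le> (1/3) ^ (j1 + 2)" using gap by (intro power_decreasing) auto
  have r2: "(1/3::real) ^ (j1 + 2) = (1/3) ^ j1 / 9" by (simp add: power_add)
  have "\<bar>u - pp \<theta> b2\<bar> < 10 * (1/3) ^ j2" using u(2) by (simp add: abs_minus_commute)
  have "\<bar>t - pp \<theta> b1\<bar> < (1/3)^j1" using b1(2) by (simp add: abs_minus_commute)
  from tri_lt[OF tri_lt[OF \<open>\<bar>u - pp \<theta> b2\<bar> < 10 * (1/3) ^ j2\<close> b2(2)] this]
  have "\<bar>u - pp \<theta> b1\<bar> < 10 * (1/3) ^ j2 + (1/3) ^ j2 + (1/3)^j1" .
  moreover have "10 * (1/3::real) ^ j2 + (1/3) ^ j2 + (1/3)^j1 \<le> 3 * (1/3) ^ j1"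
  proof -
    have "0 \<le> (1/3::real) ^ j1" by simp
    then show ?thesis using r unfolding r2 by linarith
  qed
  ultimately have "\<bar>pp \<theta> b1 - u\<bar> < 3 * (1/3) ^ j1" by (simp add: abs_minus_commute)
  then have "u \<in> AA \<theta> N K" by (rule Mset_in_AA[OF b1(1)])
  then show False using u(1) by simp
qed

lemma overlap:
  "real (\<Sum>j\<in>{1..N}. card {b\<in>Mset \<theta> N K j. \<bar>pp \<theta> b - t\<bar> < (1/3)^j}) \<le> (if t \<in> AA \<theta> N K then 54 * K else 0)"
proof -
  define c where "c j = card {b\<in>Mset \<theta> N K j. \<bar>pp \<theta> b - t\<bar> < (1/3)^j}" for j
  show ?thesis
  proof (cases "t \<in> AA \<theta> N K")
    case False
    have "c j = 0" for j
    proof -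
      have "{b\<in>Mset \<theta> N K j. \<bar>pp \<theta> b - t\<bar> < (1/3)^j} = {}"
      proof (rule ccontr)
        assume "{b\<in>Mset \<theta> N K j. \<bar>pp \<theta> b - t\<bar> < (1/3)^j} \<noteq> {}"
        then obtain b where "b \<in> Mset \<theta> N K j" "\<bar>pp \<theta> b - t\<bar> < (1/3)^j" by auto
        moreover have "(1/3::real)^j \<le> 3 * (1/3)^j" by simp
        ultimately have "t \<in> AA \<theta> N K" using Mset_in_AA by (meson less_le_trans)
        then show False using False by simp
      qed
      then show ?thesis by (simp add: c_def)
    qed
    then show ?thesis using False by (simp add: c_def[symmetric])
  next
    case True
    define L where "L = {j\<in>{1..N}. c j \<noteq> 0}"
    show ?thesis
    proof (cases "L = {}")
      case True
      then have "c j = 0" if "j \<in> {1..N}" for j using that by (auto simp: L_def)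
      then show ?thesis using Kge by (simp add: c_def[symmetric])
    next
      case False
      define a where "a = Min L"
      have finL: "finite L" by (simp add: L_def)
      have aL: "a \<in> L" using False finL by (simp add: a_def)
      have bound: "real (c j) \<le> (if j = a then 27 * K else 0) + (if j = a + 1 then 27 * K else 0)"
        if j: "j \<in> {1..N}" for j
      proof (cases "c j = 0")
        case True then show ?thesis using Kge by simp
      next
        case False
        then have jL: "j \<in> L" using j by (simp add: L_def)
        then have "a \<le> j" using finL by (simp add: a_def)
        moreover have "\<not> a + 2 \<le> j"
        proof
          assume g: "a + 2 \<le> j"
          have "c a \<noteq> 0" using aL by (simp add: L_def)
          then obtain b1 where "b1 \<in> Mset \<theta> N K a" "\<bar>pp \<theta> b1 - t\<bar> < (1/3)^a"
            by (auto simp: c_def card_eq_0_iff)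
          moreover obtain b2 where "b2 \<in> Mset \<theta> N K j" "\<bar>pp \<theta> b2 - t\<bar> < (1/3)^j"
            using False by (auto simp: c_def card_eq_0_iff)
          ultimately show False using level_gap g by blast
        qed
        ultimately have "j = a \<or> j = a + 1" by auto
        moreover have "real (c j) \<le> 27 * K" unfolding c_def by (rule level_count) (use j in simp)
        ultimately show ?thesis by auto
      qed
      have "real (\<Sum>j\<in>{1..N}. c j) = (\<Sum>j\<in>{1..N}. real (c j))" by simp
      also have "\<dots> \<le> (\<Sum>j\<in>{1..N}. (if j = a then 27 * K else 0) + (if j = a + 1 then 27 * K else 0))"
        by (rule sum_mono) (rule bound)
      also have "\<dots> = (if a \<in> {1..N} then 27 * K else 0) + (if a + 1 \<in> {1..N} then 27 * K else 0)"
        by (simp add: sum.distrib)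
      also have "\<dots> \<le> 54 * K" using Kge by simp
      finally show ?thesis using True by (simp add: c_def[symmetric])
    qed
  qed
qed

lemma sum_r_bound:
  "(\<Sum>j\<in>{1..N}. \<Sum>b\<in>Mset \<theta> N K j. ennreal ((1/3)^j)) \<le> ennreal (27 / K ^ 2)"
proof -
  let ?S = "(\<Sum>j\<in>{1..N}. \<Sum>b\<in>Mset \<theta> N K j. ennreal ((1/3)^j))"
  have "ennreal 2 * ?S = (\<Sum>j\<in>{1..N}. \<Sum>b\<in>Mset \<theta> N K j. emeasure lborel (ball (pp \<theta> b) ((1/3)^j)))"
    by (simp add: sum_distrib_left emeasure_ball ennreal_mult mult_ac)
  also have "\<dots> = (\<Sum>j\<in>{1..N}. \<Sum>b\<in>Mset \<theta> N K j. \<integral>\<^sup>+ t. indicator (ball (pp \<theta> b) ((1/3)^j)) t \<partial>lborel)"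
    by simp
  also have "\<dots> = (\<integral>\<^sup>+ t. (\<Sum>j\<in>{1..N}. \<Sum>b\<in>Mset \<theta> N K j. indicator (ball (pp \<theta> b) ((1/3)^j)) t) \<partial>lborel)"
  proof -
    have "(\<Sum>j\<in>{1..N}. \<Sum>b\<in>Mset \<theta> N K j. \<integral>\<^sup>+ t. indicator (ball (pp \<theta> b) ((1/3)^j)) t \<partial>lborel)
      = (\<Sum>j\<in>{1..N}. \<integral>\<^sup>+ t. (\<Sum>b\<in>Mset \<theta> N K j. indicator (ball (pp \<theta> b) ((1/3)^j)) t) \<partial>lborel)"
      by (intro sum.cong refl, rule nn_integral_sum[symmetric], rule borel_measurable_indicator, simp)
    also have "\<dots> = (\<integral>\<^sup>+ t. (\<Sum>j\<in>{1..N}. \<Sum>b\<in>Mset \<theta> N K j. indicator (ball (pp \<theta> b) ((1/3)^j)) t) \<partial>lborel)"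
      by (rule nn_integral_sum[symmetric], rule borel_measurable_sum, rule borel_measurable_indicator, simp)
    finally show ?thesis .
  qed
  also have "\<dots> = (\<integral>\<^sup>+ t. of_nat (\<Sum>j\<in>{1..N}. card {b\<in>Mset \<theta> N K j. \<bar>pp \<theta> b - t\<bar> < (1/3)^j}) \<partial>lborel)"
    by (rule nn_integral_cong) (simp add: cnt_ind[symmetric] cnt_def)
  also have "\<dots> \<le> (\<integral>\<^sup>+ t. ennreal (54 * K) * indicator (AA \<theta> N K) t \<partial>lborel)"
  proof (rule nn_integral_mono)
    fix t
    have "(of_nat (\<Sum>j\<in>{1..N}. card {b\<in>Mset \<theta> N K j. \<bar>pp \<theta> b - t\<bar> < (1/3)^j}) :: ennreal)
        = ennreal (real (\<Sum>j\<in>{1..N}. card {b\<in>Mset \<theta> N K j. \<bar>pp \<theta> b - t\<bar> < (1/3)^j}))"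
      by (rule ennreal_of_nat_eq_real_of_nat)
    also have "\<dots> \<le> ennreal (if t \<in> AA \<theta> N K then 54 * K else 0)"
      by (rule ennreal_leI) (rule overlap)
    also have "\<dots> = ennreal (54 * K) * indicator (AA \<theta> N K) t" by (simp add: indicator_def)
    finally show "(of_nat (\<Sum>j\<in>{1..N}. card {b\<in>Mset \<theta> N K j. \<bar>pp \<theta> b - t\<bar> < (1/3)^j}) :: ennreal)
        \<le> ennreal (54 * K) * indicator (AA \<theta> N K) t" .
  qed
  also have "\<dots> = ennreal (54 * K) * emeasure lborel (AA \<theta> N K)"
    by (rule nn_integral_cmult_indicator) (rule AA_sets)
  also have "\<dots> \<le> ennreal (54 * K) * ennreal (1 / K ^ 3)"
    by (rule mult_left_mono[OF hyp]) simp
  also have "\<dots> = ennreal 2 * ennreal (27 / K ^ 2)"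
  proof -
    have "54 * K * (1 / K ^ 3) = 2 * (27 / K ^ 2)" using Kge by (simp add: field_simps power3_eq_cube power2_eq_square)
    have "ennreal (54 * K) * ennreal (1 / K ^ 3) = ennreal (54 * K * (1 / K ^ 3))"
      by (rule ennreal_mult[symmetric]) (use Kge in auto)
    also have "\<dots> = ennreal (2 * (27 / K ^ 2))" unfolding \<open>54 * K * (1 / K ^ 3) = 2 * (27 / K ^ 2)\<close> ..
    also have "\<dots> = ennreal 2 * ennreal (27 / K ^ 2)" by (rule ennreal_mult) auto
    finally show ?thesis .
  qed
  finally have *: "ennreal 2 * ?S \<le> ennreal 2 * ennreal (27 / K ^ 2)" .
  have "?S = ennreal (1/2) * (ennreal 2 * ?S)"
    by (rule half_two[symmetric])
  also have "\<dots> \<le> ennreal (1/2) * (ennreal 2 * ennreal (27 / K ^ 2))"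
    by (rule mult_left_mono[OF *]) simp
  also have "\<dots> = ennreal (27 / K ^ 2)"
    by (rule half_two)
  finally show ?thesis .
qed


lemma good_integral:
  assumes ad: "a \<in> digits N" and nb: "\<not> bad \<theta> N K a"
  shows "(\<integral>\<^sup>+ s. indicator (ball (pp \<theta> a) ((1/3)^N)) s * of_nat (fmult N \<theta> s) \<partial>lborel)
    \<le> ennreal (9 * K * (2 * (1/3)^N))"
proof -
  have "(\<integral>\<^sup>+ s. indicator (ball (pp \<theta> a) ((1/3)^N)) s * of_nat (fmult N \<theta> s) \<partial>lborel)
     \<le> (\<integral>\<^sup>+ s. ennreal (9 * K) * indicator (ball (pp \<theta> a) ((1/3)^N)) s \<partial>lborel)"
  proof (rule nn_integral_mono)
    fix s
    show "indicator (ball (pp \<theta> a) ((1/3)^N)) s * (of_nat (fmult N \<theta> s) :: ennreal)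
        \<le> ennreal (9 * K) * indicator (ball (pp \<theta> a) ((1/3)^N)) s"
    proof (cases "s \<in> ball (pp \<theta> a) ((1/3)^N)")
      case True
      then have "\<bar>pp \<theta> a - s\<bar> < (1/3)^N" by (simp add: dist_real_def)
      from good_bound[OF ad nb this] have "(of_nat (fmult N \<theta> s) :: ennreal) \<le> ennreal (9 * K)"
        by (simp add: ennreal_of_nat_eq_real_of_nat ennreal_leI)
      then show ?thesis using True by simp
    next
      case False then show ?thesis by simp
    qed
  qed
  also have "\<dots> = ennreal (9 * K) * emeasure lborel (ball (pp \<theta> a) ((1/3)^N))"
    by (rule nn_integral_cmult_indicator) simp
  also have "\<dots> = ennreal (9 * K * (2 * (1/3)^N))"
  proof -
    have eb: "emeasure lborel (ball (pp \<theta> a) ((1/3)^N)) = ennreal (2 * (1/3)^N)" by (rule emeasure_ball) simp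
    show ?thesis unfolding eb by (rule ennreal_mult[symmetric]) (use Kge in auto)
  qed
  finally show ?thesis .
qed

lemma main_step:
  assumes K0: "K \<ge> 13851" and IH: "\<And>n. n < N \<Longrightarrow> Mq \<theta> n \<le> ennreal (19 * K)"
  shows "Mq \<theta> N \<le> ennreal (19 * K)"
proof -
  define X where "X a = (\<integral>\<^sup>+ s. indicator (ball (pp \<theta> a) ((1/3)^N)) s * of_nat (fmult N \<theta> s) \<partial>lborel)" for a
  define B where "B a = (if bad \<theta> N K a then X a else 0)" for a
  have Mq_eq: "Mq \<theta> N = (\<Sum>a\<in>digits N. X a)" unfolding X_def by (rule Mq_decomp)
  have split1: "X a \<le> ennreal (9 * K * (2 * (1/3)^N)) + B a" if a: "a \<in> digits N" for a
  proof (cases "bad \<theta> N K a")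
    case True then show ?thesis by (simp add: B_def)
  next
    case False
    then show ?thesis using good_integral[OF a False] by (simp add: B_def X_def)
  qed
  have badsplit: "B a \<le> (\<Sum>j\<in>{1..N}. if take j a \<in> Mset \<theta> N K j then X a else 0)" if a: "a \<in> digits N" for a
  proof (cases "bad \<theta> N K a")
    case False then show ?thesis by (simp add: B_def)
  next
    case True
    have la: "length a = N" using a digits_length by blast
    have ex: "\<exists>j. bad \<theta> N K (take j a)" using True by (metis take_all order_refl la)
    define j0 where "j0 = (LEAST j. bad \<theta> N K (take j a))"
    have bj0: "bad \<theta> N K (take j0 a)" unfolding j0_def using ex by (rule LeastI_ex)
    have minj: "\<not> bad \<theta> N K (take i a)" if "i < j0" for i
      using not_less_Least[of i "\<lambda>j. bad \<theta> N K (take j a)"] that unfolding j0_def by blast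
    have j0N: "j0 \<le> N" unfolding j0_def using True la by (metis Least_le take_all order_refl)
    have j00: "j0 \<noteq> 0" using bj0 root_not_bad by (metis take_0)
    have "take j0 a \<in> Mset \<theta> N K j0"
      unfolding Mset_def using bj0 minj[of "j0 - 1"] j00 digits_take[OF a j0N] by simp
    then have j0in: "j0 \<in> {1..N}" and mem: "take j0 a \<in> Mset \<theta> N K j0" using j00 j0N by auto
    have "B a = (if take j0 a \<in> Mset \<theta> N K j0 then X a else 0)" using True mem by (simp add: B_def)
    also have "\<dots> \<le> (\<Sum>j\<in>{1..N}. if take j a \<in> Mset \<theta> N K j then X a else 0)"
      by (rule member_le_sum[OF j0in]) auto
    finally show ?thesis .
  qed
  have inner: "(\<Sum>a\<in>digits N. if take j a \<in> Mset \<theta> N K j then X a else 0)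
      \<le> (\<Sum>b\<in>Mset \<theta> N K j. ennreal (27 * K * (19 * K)) * ennreal ((1/3)^j))"
    if j: "j \<in> {1..N}" for j
  proof -
    have jN: "j \<le> N" using j by simp
    have "(\<Sum>a\<in>digits N. if take j a \<in> Mset \<theta> N K j then X a else 0)
        = (\<Sum>b\<in>digits j. \<Sum>c\<in>digits (N - j). if take j (b @ c) \<in> Mset \<theta> N K j then X (b @ c) else 0)"
      by (rule sum_digits_split[OF jN])
    also have "\<dots> = (\<Sum>b\<in>digits j. if b \<in> Mset \<theta> N K j then (\<Sum>c\<in>digits (N - j). X (b @ c)) else 0)"
    proof (rule sum.cong[OF refl])
      fix b assume "b \<in> digits j"
      then have "length b = j" by (rule digits_length)
      then show "(\<Sum>c\<in>digits (N - j). if take j (b @ c) \<in> Mset \<theta> N K j then X (b @ c) else 0)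
          = (if b \<in> Mset \<theta> N K j then (\<Sum>c\<in>digits (N - j). X (b @ c)) else 0)" by simp
    qed
    also have "\<dots> \<le> (\<Sum>b\<in>digits j. if b \<in> Mset \<theta> N K j then ennreal (27 * K * (19 * K)) * ennreal ((1/3)^j) else 0)"
    proof (rule sum_mono)
      fix b assume bd: "b \<in> digits j"
      show "(if b \<in> Mset \<theta> N K j then (\<Sum>c\<in>digits (N - j). X (b @ c)) else 0)
          \<le> (if b \<in> Mset \<theta> N K j then ennreal (27 * K * (19 * K)) * ennreal ((1/3)^j) else 0)"
      proof (cases "b \<in> Mset \<theta> N K j")
        case False then show ?thesis by simp
      next
        case True
        have "(\<Sum>c\<in>digits (N - j). X (b @ c))
            \<le> of_nat (card {b'\<in>digits j. \<bar>pp \<theta> b' - pp \<theta> b\<bar> < 2 * (1/3)^j}) * (ennreal ((1/3)^j) * Mq \<theta> (N-j))"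
          unfolding X_def by (rule block_bound[OF bd jN])
        also have "\<dots> \<le> ennreal (27 * K) * (ennreal ((1/3)^j) * ennreal (19 * K))"
        proof (rule mult_mono)
          have "(of_nat (card {b'\<in>digits j. \<bar>pp \<theta> b' - pp \<theta> b\<bar> < 2 * (1/3)^j}) :: ennreal)
              = ennreal (real (card {b'\<in>digits j. \<bar>pp \<theta> b' - pp \<theta> b\<bar> < 2 * (1/3)^j}))"
            by (rule ennreal_of_nat_eq_real_of_nat)
          also have "\<dots> \<le> ennreal (27 * K)" by (rule ennreal_leI) (rule Mset_near[OF True jN])
          finally show "(of_nat (card {b'\<in>digits j. \<bar>pp \<theta> b' - pp \<theta> b\<bar> < 2 * (1/3)^j}) :: ennreal) \<le> ennreal (27 * K)" .
          have "Mq \<theta> (N - j) \<le> ennreal (19 * K)" using IH[of "N - j"] j by simp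
          then show "ennreal ((1/3)^j) * Mq \<theta> (N-j) \<le> ennreal ((1/3)^j) * ennreal (19 * K)"
            by (rule mult_left_mono) simp
        qed simp_all
        also have "\<dots> = ennreal (27 * K * (19 * K)) * ennreal ((1/3)^j)"
          using Kge by (simp add: ennreal_mult[symmetric] mult_ac)
        finally show ?thesis using True by simp
      qed
    qed
    also have "\<dots> = (\<Sum>b\<in>Mset \<theta> N K j. ennreal (27 * K * (19 * K)) * ennreal ((1/3)^j))"
    proof -
      have e: "Mset \<theta> N K j = {b\<in>digits j. b \<in> Mset \<theta> N K j}" by (auto simp: Mset_def)
      have "(\<Sum>b\<in>digits j. if b \<in> Mset \<theta> N K j then ennreal (27 * K * (19 * K)) * ennreal ((1/3)^j) else 0)
        = (\<Sum>b\<in>{b\<in>digits j. b \<in> Mset \<theta> N K j}. ennreal (27 * K * (19 * K)) * ennreal ((1/3)^j))"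
        by (rule sum.inter_filter[symmetric]) simp
      then show ?thesis using e by simp
    qed
    finally show ?thesis .
  qed
  have "Mq \<theta> N \<le> (\<Sum>a\<in>digits N. ennreal (9 * K * (2 * (1/3)^N)) + B a)"
    unfolding Mq_eq by (rule sum_mono) (rule split1)
  also have "\<dots> = (\<Sum>a\<in>digits N. ennreal (9 * K * (2 * (1/3)^N))) + (\<Sum>a\<in>digits N. B a)"
    by (rule sum.distrib)
  also have "(\<Sum>a\<in>digits N. ennreal (9 * K * (2 * (1/3)^N))) = ennreal (18 * K)"
  proof -
    have "(\<Sum>a\<in>digits N. ennreal (9 * K * (2 * (1/3)^N))) = of_nat (3 ^ N) * ennreal (9 * K * (2 * (1/3)^N))"
      by (simp add: card_digits)
    also have "\<dots> = ennreal (real (3 ^ N) * (9 * K * (2 * (1/3)^N)))"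
      using Kge by (simp add: ennreal_of_nat_eq_real_of_nat ennreal_mult)
    also have "real (3 ^ N) * (9 * K * (2 * (1/3)^N)) = 18 * K * ((3::real) ^ N * (1/3)^N)" by simp
    also have "(3::real) ^ N * (1/3)^N = 1" by (simp add: power_mult_distrib[symmetric])
    finally show ?thesis by simp
  qed
  also have "(\<Sum>a\<in>digits N. B a) \<le> (\<Sum>a\<in>digits N. \<Sum>j\<in>{1..N}. if take j a \<in> Mset \<theta> N K j then X a else 0)"
    by (rule sum_mono) (rule badsplit)
  also have "\<dots> = (\<Sum>j\<in>{1..N}. \<Sum>a\<in>digits N. if take j a \<in> Mset \<theta> N K j then X a else 0)"
    by (rule sum.swap)
  also have "\<dots> \<le> (\<Sum>j\<in>{1..N}. \<Sum>b\<in>Mset \<theta> N K j. ennreal (27 * K * (19 * K)) * ennreal ((1/3)^j))"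
    by (rule sum_mono) (rule inner)
  also have "\<dots> = ennreal (27 * K * (19 * K)) * (\<Sum>j\<in>{1..N}. \<Sum>b\<in>Mset \<theta> N K j. ennreal ((1/3)^j))"
    by (simp add: sum_distrib_left mult_ac)
  also have "\<dots> \<le> ennreal (27 * K * (19 * K)) * ennreal (27 / K ^ 2)"
    by (rule mult_left_mono[OF sum_r_bound]) simp
  also have "\<dots> = ennreal 13851"
  proof -
    have "27 * K * (19 * K) * (27 / K ^ 2) = 13851" using Kge by (simp add: field_simps power2_eq_square)
    then show ?thesis using Kge by (simp add: ennreal_mult[symmetric])
  qed
  also have "ennreal (18 * K) + ennreal 13851 = ennreal (18 * K + 13851)"
    using Kge by simp
  also have "\<dots> \<le> ennreal (19 * K)" using K0 by (intro ennreal_leI) simp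
  finally show ?thesis by simp
qed

end

lemma main_induct:
  fixes \<theta> K :: real
  assumes K0: "K \<ge> 13851"
  shows "emeasure lborel (AA \<theta> N K) \<le> ennreal (1 / K ^ 3) \<Longrightarrow> Mq \<theta> N \<le> ennreal (19 * K)"
proof (induction N rule: less_induct)
  case (less N)
  have Kge: "K \<ge> 1" using K0 by simp
  show ?case
  proof (rule main_step[OF Kge less.prems K0])
    fix n assume "n < N"
    have "emeasure lborel (AA \<theta> n K) \<le> emeasure lborel (AA \<theta> N K)"
      by (rule emeasure_mono[OF AA_mono]) (use \<open>n < N\<close> AA_sets[unfolded sets_lborel] in simp_all)
    also have "\<dots> \<le> ennreal (1 / K ^ 3)" by (rule less.prems)
    finally show "Mq \<theta> n \<le> ennreal (19 * K)" by (rule less.IH[OF \<open>n < N\<close>])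
  qed
qed


theorem theorem4:
  shows "\<exists>C K0 :: real. \<forall>(N::nat) (\<theta>::real) (K::real).
    0 \<le> \<theta> \<and> \<theta> < pi \<and> K \<ge> K0 \<and>
    emeasure lborel {s. real (fstar N \<theta> s) \<ge> K} \<le> ennreal (1 / K ^ 3) \<longrightarrow>
    (\<forall>n\<le>N. (\<integral>\<^sup>+ s. ennreal ((real (fmult n \<theta> s))\<^sup>2) \<partial>lborel) \<le> ennreal (C * K))"
proof (rule exI[of _ 19], rule exI[of _ 13851], (rule allI)+, rule impI)
  fix N :: nat and \<theta> K :: real
  assume h: "0 \<le> \<theta> \<and> \<theta> < pi \<and> K \<ge> 13851 \<and>
    emeasure lborel {s. real (fstar N \<theta> s) \<ge> K} \<le> ennreal (1 / K ^ 3)"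
  then have K0: "K \<ge> 13851" and hN: "emeasure lborel (AA \<theta> N K) \<le> ennreal (1 / K ^ 3)"
    by (auto simp: AA_def)
  show "\<forall>n\<le>N. (\<integral>\<^sup>+ s. ennreal ((real (fmult n \<theta> s))\<^sup>2) \<partial>lborel) \<le> ennreal (19 * K)"
  proof (intro allI impI)
    fix n assume nN: "n \<le> N"
    have "emeasure lborel (AA \<theta> n K) \<le> emeasure lborel (AA \<theta> N K)"
      by (rule emeasure_mono[OF AA_mono[OF nN]]) (use AA_sets[unfolded sets_lborel] in simp)
    also have "\<dots> \<le> ennreal (1 / K ^ 3)" by (rule hN)
    finally have "Mq \<theta> n \<le> ennreal (19 * K)" by (rule main_induct[OF K0])
    moreover have "(\<integral>\<^sup>+ s. ennreal ((real (fmult n \<theta> s))\<^sup>2) \<partial>lborel) = Mq \<theta> n"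
      unfolding Mq_def
      by (rule nn_integral_cong) (simp add: ennreal_power[symmetric] ennreal_of_nat_eq_real_of_nat)
    ultimately show "(\<integral>\<^sup>+ s. ennreal ((real (fmult n \<theta> s))\<^sup>2) \<partial>lborel) \<le> ennreal (19 * K)" by simp
  qed
qed

end
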